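(* Let $E_\alpha(z)=\sum_{k=0}^\infty \frac{z^k}{\Gamma(\alpha k+1)}$ denote the Mittag-Leffler function, $\alpha>0$. For $0<\alpha<1$, \[ E_\alpha((x+y)^\alpha)\le E_\alpha(x^\alpha)E_\alpha(y^\alpha),\qquad x,y\ge 0, \] and for $\alpha>1$, \[ E_\alpha((x+y)^\alpha)\ge E_\alpha(x^\alpha)E_\alpha(y^\alpha),\qquad x,y\ge 0. \] Both inequalities are strict whenever $x>0$ and $y>0$. *)

theory Defs
  imports "HOL-Analysis.Analysis"
begin

definition mittag_leffler :: "real \<Rightarrow> real \<Rightarrow> real" where
  "mittag_leffler \<alpha> z = (\<Sum>k. z ^ k / Gamma (\<alpha> * real k + 1))"

end

theory Submission
  imports Defs
begin


definition fr :: "real \<Rightarrow> real \<Rightarrow> real" where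
  "fr a u = u powr a / Gamma (a + 1)"

lemma RL:
  fixes \<alpha> \<beta> T :: real
  assumes a: "\<alpha> > 0" and b: "\<beta> \<ge> 0" and T: "T > 0"
  shows "((\<lambda>u. (T - u) powr (\<alpha> - 1) * fr \<beta> u) has_integral (Gamma \<alpha> * fr (\<alpha> + \<beta>) T)) {0..T}"
proof -
  have B: "((\<lambda>s. s powr \<beta> * (1 - s) powr (\<alpha> - 1)) has_integral Beta (\<beta> + 1) \<alpha>) {0..1}"
    using has_integral_Beta_real[of "\<beta>+1" \<alpha>] a b by simp
  define c where "c = T powr (\<alpha> - 1 + \<beta>) / Gamma (\<beta> + 1)"
  have B2: "((\<lambda>s. c * (s powr \<beta> * (1 - s) powr (\<alpha> - 1))) has_integral c * Beta (\<beta> + 1) \<alpha>) {0..1}"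
    by (rule has_integral_mult_right[OF B])
  have eq: "c * (s powr \<beta> * (1 - s) powr (\<alpha> - 1)) = (T - T * s) powr (\<alpha> - 1) * fr \<beta> (T * s)"
    if "s \<in> {0..1}" for s
  proof -
    have "(T - T * s) powr (\<alpha> - 1) = T powr (\<alpha> - 1) * (1 - s) powr (\<alpha> - 1)"
      using that T by (subst powr_mult[symmetric]) (auto simp: algebra_simps)
    moreover have "(T * s) powr \<beta> = T powr \<beta> * s powr \<beta>"
      using that T by (subst powr_mult) auto
    ultimately show ?thesis unfolding c_def fr_def by (simp add: powr_add)
  qed
  have B3: "((\<lambda>s. (T - T * s) powr (\<alpha> - 1) * fr \<beta> (T * s)) has_integral c * Beta (\<beta> + 1) \<alpha>) {0..1}"
    using has_integral_spike_finite_eq[of "{}"] B2 eq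
    by (metis (no_types, lifting) has_integral_cong)
  note B4 = has_integral_affinity[of "\<lambda>s. (T - T * s) powr (\<alpha> - 1) * fr \<beta> (T * s)" "c * Beta (\<beta> + 1) \<alpha>" 0 1 "1/T" 0]
  have img: "(\<lambda>x. (1 / (1 / T)) *\<^sub>R x + - ((1 / (1 / T)) *\<^sub>R 0)) ` cbox 0 1 = {0..T}"
    using T by (simp add: cbox_interval image_mult_atLeastAtMost)
  have B5: "((\<lambda>u. (T - u) powr (\<alpha> - 1) * fr \<beta> u) has_integral T * (c * Beta (\<beta> + 1) \<alpha>)) {0..T}"
    using B4[OF B3[unfolded cbox_interval[symmetric]]] T img by simp
  have "T * (c * Beta (\<beta> + 1) \<alpha>) = Gamma \<alpha> * fr (\<alpha> + \<beta>) T"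
  proof -
    have "Gamma (\<beta> + 1) > 0" by (rule Gamma_real_pos) (use b in linarith)
    then have g1: "Gamma (\<beta> + 1) \<noteq> 0" by simp
    have "Gamma (\<beta> + 1 + \<alpha>) > 0" by (rule Gamma_real_pos) (use a b in linarith)
    then have g2: "Gamma (\<beta> + 1 + \<alpha>) \<noteq> 0" by simp
    have "T * T powr (\<alpha> - 1 + \<beta>) = T powr (\<alpha> + \<beta>)"
      using T by (simp add: powr_add[symmetric] powr_mult_base)
    then show ?thesis using g1 g2 unfolding c_def fr_def Beta_def
      by (simp add: field_simps add_ac)
  qed
  then show ?thesis using B5 by simp
qed
lemma fr_nonneg: "a \<ge> 0 \<Longrightarrow> fr a u \<ge> 0"
  unfolding fr_def by (intro divide_nonneg_pos powr_ge_zero Gamma_real_pos) auto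

lemma fr_0: "u > 0 \<Longrightarrow> fr 0 u = 1"
  by (simp add: fr_def)

lemma termwise:
  fixes \<alpha> \<sigma> :: real
  assumes a: "\<alpha> > 0"
    and ker: "\<And>T x u. 0 < u \<Longrightarrow> u < x \<Longrightarrow> x < T \<Longrightarrow> \<sigma> * (T - u) powr (\<alpha> - 1) \<le> \<sigma> * (x - u) powr (\<alpha> - 1)"
  shows "x > 0 \<Longrightarrow> t > 0 \<Longrightarrow> \<sigma> * fr (\<alpha> * real n) (x + t) \<le> \<sigma> * (\<Sum>j\<le>n. fr (\<alpha> * real j) x * fr (\<alpha> * real (n - j)) t)"
proof (induction n arbitrary: x t)
  case 0 then show ?case by (simp add: fr_def)
next
  case (Suc n)
  define T where "T = x + t"
  define \<beta> where "\<beta> = \<alpha> * real n"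
  define k where "k = (\<lambda>u. (T - u) powr (\<alpha> - 1) * fr \<beta> u)"
  have xT: "0 < x" "x < T" "0 < t" "0 < T" using Suc.prems T_def by auto
  have b0: "\<beta> \<ge> 0" using a by (simp add: \<beta>_def)
  have hk: "(k has_integral Gamma \<alpha> * fr (\<alpha> + \<beta>) T) {0..T}"
    unfolding k_def by (rule RL[OF a b0]) (use xT in auto)
  have ab: "\<alpha> + \<beta> = \<alpha> * real (Suc n)" by (simp add: \<beta>_def algebra_simps)
  have kA: "k integrable_on {0..x}"
    by (rule integrable_subinterval_real[OF has_integral_integrable[OF hk]]) (use xT in auto)
  have kB: "k integrable_on {x..T}"
    by (rule integrable_subinterval_real[OF has_integral_integrable[OF hk]]) (use xT in auto)
  have comb: "integral {0..x} k + integral {x..T} k = Gamma \<alpha> * fr (\<alpha> + \<beta>) T"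
    using Henstock_Kurzweil_Integration.integral_combine[of 0 x T k] has_integral_integrable[OF hk] hk xT by (simp add: integral_unique)
  have A: "\<sigma> * integral {0..x} k \<le> \<sigma> * (Gamma \<alpha> * fr (\<alpha> + \<beta>) x)"
  proof -
    have h1: "((\<lambda>u. \<sigma> * k u) has_integral \<sigma> * integral {0..x} k) {0<..<x}"
      using has_integral_mult_right[OF integrable_integral[OF kA], of \<sigma>] has_integral_Icc_iff_Ioo by blast
    have h2: "((\<lambda>u. \<sigma> * ((x - u) powr (\<alpha> - 1) * fr \<beta> u)) has_integral \<sigma> * (Gamma \<alpha> * fr (\<alpha> + \<beta>) x)) {0<..<x}"
      using has_integral_mult_right[OF RL[OF a b0 xT(1)], of \<sigma>] has_integral_Icc_iff_Ioo by blast
    show ?thesis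
    proof (rule has_integral_le[OF h1 h2])
      fix u assume u: "u \<in> {0<..<x}"
      have "(\<sigma> * (T - u) powr (\<alpha> - 1)) * fr \<beta> u \<le> (\<sigma> * (x - u) powr (\<alpha> - 1)) * fr \<beta> u"
        by (rule mult_right_mono[OF ker fr_nonneg[OF b0]]) (use u xT in auto)
      then show "\<sigma> * k u \<le> \<sigma> * ((x - u) powr (\<alpha> - 1) * fr \<beta> u)"
        unfolding k_def by (simp add: mult.assoc)
    qed
  qed
  have kB': "(k has_integral integral {x..T} k) (cbox x T)"
    using integrable_integral[OF kB] by (simp add: cbox_interval)
  have img: "(\<lambda>v. (1 / 1) *\<^sub>R v + - ((1 / 1) *\<^sub>R x)) ` cbox x T = {0..t}"
    using xT T_def by (auto simp: cbox_interval image_iff intro!: bexI[where x="_ + x"])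
  have shift: "((\<lambda>v. k (v + x)) has_integral integral {x..T} k) {0..t}"
    using has_integral_affinity[OF kB', of 1 x] xT T_def by (simp add: cbox_interval)
  define R where "R = (\<lambda>v. \<Sum>j\<le>n. \<sigma> * fr (\<alpha> * real j) x * ((t - v) powr (\<alpha> - 1) * fr (\<alpha> * real (n - j)) v))"
  have hR: "(R has_integral (\<Sum>j\<le>n. \<sigma> * fr (\<alpha> * real j) x * (Gamma \<alpha> * fr (\<alpha> + \<alpha> * real (n - j)) t))) {0..t}"
    unfolding R_def
  proof (rule has_integral_sum[OF finite_atMost])
    fix j assume "j \<in> {..n}"
    show "((\<lambda>v. \<sigma> * fr (\<alpha> * real j) x * ((t - v) powr (\<alpha> - 1) * fr (\<alpha> * real (n - j)) v)) has_integral
            \<sigma> * fr (\<alpha> * real j) x * (Gamma \<alpha> * fr (\<alpha> + \<alpha> * real (n - j)) t)) {0..t}"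
      by (rule has_integral_mult_right[OF RL[OF a _ xT(3)]]) (use a in simp)
  qed
  have B: "\<sigma> * integral {x..T} k \<le> (\<Sum>j\<le>n. \<sigma> * fr (\<alpha> * real j) x * (Gamma \<alpha> * fr (\<alpha> + \<alpha> * real (n - j)) t))"
  proof -
    have h1: "((\<lambda>v. \<sigma> * k (v + x)) has_integral \<sigma> * integral {x..T} k) {0<..<t}"
      using has_integral_mult_right[OF shift, of \<sigma>] has_integral_Icc_iff_Ioo by blast
    have h2: "(R has_integral (\<Sum>j\<le>n. \<sigma> * fr (\<alpha> * real j) x * (Gamma \<alpha> * fr (\<alpha> + \<alpha> * real (n - j)) t))) {0<..<t}"
      using hR has_integral_Icc_iff_Ioo by blast
    show ?thesis
    proof (rule has_integral_le[OF h1 h2])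
      fix v assume v: "v \<in> {0<..<t}"
      define p where "p = (t - v) powr (\<alpha> - 1)"
      have p0: "p \<ge> 0" unfolding p_def by simp
      have IH: "\<sigma> * fr \<beta> (x + v) \<le> \<sigma> * (\<Sum>j\<le>n. fr (\<alpha> * real j) x * fr (\<alpha> * real (n - j)) v)"
        unfolding \<beta>_def by (rule Suc.IH) (use v xT in auto)
      have "p * (\<sigma> * fr \<beta> (x + v)) \<le> p * (\<sigma> * (\<Sum>j\<le>n. fr (\<alpha> * real j) x * fr (\<alpha> * real (n - j)) v))"
        by (rule mult_left_mono[OF IH p0])
      moreover have "\<sigma> * k (v + x) = p * (\<sigma> * fr \<beta> (x + v))"
        unfolding k_def p_def T_def by (simp add: algebra_simps)
      moreover have "R v = p * (\<sigma> * (\<Sum>j\<le>n. fr (\<alpha> * real j) x * fr (\<alpha> * real (n - j)) v))"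
        unfolding R_def p_def by (simp add: sum_distrib_left algebra_simps)
      ultimately show "\<sigma> * k (v + x) \<le> R v" by (simp only:)
    qed
  qed
  have S_eq: "(\<Sum>j\<le>Suc n. fr (\<alpha> * real j) x * fr (\<alpha> * real (Suc n - j)) t)
      = (\<Sum>j\<le>n. fr (\<alpha> * real j) x * fr (\<alpha> + \<alpha> * real (n - j)) t) + fr (\<alpha> * real (Suc n)) x"
  proof -
    have "(\<Sum>j\<le>n. fr (\<alpha> * real j) x * fr (\<alpha> * real (Suc n - j)) t)
        = (\<Sum>j\<le>n. fr (\<alpha> * real j) x * fr (\<alpha> + \<alpha> * real (n - j)) t)"
      by (rule sum.cong) (auto simp: Suc_diff_le of_nat_diff algebra_simps)
    then show ?thesis using xT by (simp add: fr_0)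
  qed
  have G: "Gamma \<alpha> > 0" using a by (rule Gamma_real_pos)
  have "Gamma \<alpha> * (\<sigma> * fr (\<alpha> * real (Suc n)) (x + t)) = \<sigma> * (Gamma \<alpha> * fr (\<alpha> + \<beta>) T)"
    by (simp only: ab T_def) (simp add: algebra_simps)
  also have "\<dots> = \<sigma> * integral {0..x} k + \<sigma> * integral {x..T} k"
    by (simp only: comb[symmetric] distrib_left)
  also have "\<dots> \<le> \<sigma> * (Gamma \<alpha> * fr (\<alpha> + \<beta>) x) + (\<Sum>j\<le>n. \<sigma> * fr (\<alpha> * real j) x * (Gamma \<alpha> * fr (\<alpha> + \<alpha> * real (n - j)) t))"
    using A B by simp
  also have "\<dots> = Gamma \<alpha> * (\<sigma> * (\<Sum>j\<le>Suc n. fr (\<alpha> * real j) x * fr (\<alpha> * real (Suc n - j)) t))"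
    unfolding S_eq ab by (simp add: sum_distrib_left algebra_simps)
  finally show ?case using G by simp
qed



lemma Gamma_ratio:
  fixes s \<alpha> :: real
  assumes s: "s \<ge> 2" and a: "\<alpha> > 0"
  shows "(s - 1) powr \<alpha> * Gamma s \<le> Gamma (s + \<alpha>)"
proof -
  define f where "f = ln \<circ> (Gamma :: real \<Rightarrow> real)"
  have cv: "convex_on {0<..} f" unfolding f_def by (rule log_convex_Gamma_real)
  have I: "s - 1 \<in> {0<..}" "s + \<alpha> \<in> {0<..}" using s a by auto
  have st: "s - 1 < s" "s < s + \<alpha>" using a by auto
  note sl = convex_on_slope_le[OF cv I st]
  have sw: "(a - b) / (c - d) = (b - a) / (d - c)" for a b c d :: real
    by (metis minus_diff_eq minus_divide_divide)
  have "(f (s - 1) - f s) / ((s - 1) - s) \<le> (f s - f (s + \<alpha>)) / (s - (s + \<alpha>))"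
    using sl by linarith
  hence "(f s - f (s - 1)) / (s - (s - 1)) \<le> (f (s + \<alpha>) - f s) / ((s + \<alpha>) - s)"
    by (simp only: sw)
  hence le: "f s - f (s - 1) \<le> (f (s + \<alpha>) - f s) / \<alpha>" by simp
  have g1: "Gamma (s - 1) > 0" "Gamma s > 0" "Gamma (s + \<alpha>) > 0"
    using s a by (auto intro!: Gamma_real_pos)
  have eqG: "Gamma s = (s - 1) * Gamma (s - 1)"
  proof -
    have "s - 1 \<notin> \<int>\<^sub>\<le>\<^sub>0" using s nonpos_Ints_nonpos by fastforce
    then show ?thesis using Gamma_plus1[of "s - 1"] by simp
  qed
  have "ln (Gamma s) = ln (s - 1) + ln (Gamma (s - 1))"
    unfolding eqG by (rule ln_mult_pos) (use g1 s in auto)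
  hence "f s - f (s - 1) = ln (s - 1)" unfolding f_def by simp
  hence "\<alpha> * ln (s - 1) \<le> f (s + \<alpha>) - f s" using le a by (simp add: field_simps)
  hence "exp (\<alpha> * ln (s - 1) + ln (Gamma s)) \<le> exp (ln (Gamma (s + \<alpha>)))"
    unfolding f_def by simp
  hence "exp (\<alpha> * ln (s - 1)) * Gamma s \<le> Gamma (s + \<alpha>)"
    using g1 by (simp add: exp_add)
  thus ?thesis using s by (simp add: powr_def mult.commute)
qed

lemma ml_summable:
  fixes \<alpha> z :: real
  assumes a: "\<alpha> > 0" and z: "z \<ge> 0"
  shows "summable (\<lambda>k. z ^ k / Gamma (\<alpha> * real k + 1))"
proof (rule summable_ratio_test[where c = "1/2"])
  define N where "N = nat \<lceil>(1 + (2 * z + 1) powr (1 / \<alpha>)) / \<alpha>\<rceil>"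
  fix k assume k: "k \<ge> N"
  have "real k \<ge> (1 + (2 * z + 1) powr (1 / \<alpha>)) / \<alpha>"
    using k unfolding N_def by linarith
  hence ak: "\<alpha> * real k \<ge> 1 + (2 * z + 1) powr (1 / \<alpha>)" using a by (simp add: field_simps)
  define s where "s = \<alpha> * real k + 1"
  have s2: "s \<ge> 2" using ak unfolding s_def by (smt (verit) powr_ge_zero)
  have "(2 * z + 1) = ((2 * z + 1) powr (1 / \<alpha>)) powr \<alpha>"
    using a z by (simp add: powr_powr)
  also have "\<dots> \<le> (s - 1) powr \<alpha>"
    by (rule powr_mono2) (use a ak in \<open>auto simp: s_def\<close>)
  finally have b1: "2 * z + 1 \<le> (s - 1) powr \<alpha>" .
  have gs: "Gamma s > 0" using s2 by (auto intro!: Gamma_real_pos)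
  have "(2 * z + 1) * Gamma s \<le> Gamma (s + \<alpha>)"
    using order_trans[OF mult_right_mono[OF b1 less_imp_le[OF gs]] Gamma_ratio[OF s2 a]] .
  moreover have eq: "\<alpha> * real (Suc k) + 1 = s + \<alpha>" by (simp add: s_def algebra_simps)
  ultimately have G: "(2 * z + 1) * Gamma s \<le> Gamma (\<alpha> * real (Suc k) + 1)" by simp
  have zk: "z ^ k \<ge> 0" using z by simp
  have "z ^ Suc k / Gamma (\<alpha> * real (Suc k) + 1) \<le> z * z ^ k / ((2 * z + 1) * Gamma s)"
  proof -
    have p: "0 < (2 * z + 1) * Gamma s" using z gs by simp
    have "z * z ^ k / Gamma (\<alpha> * real (Suc k) + 1) \<le> z * z ^ k / ((2 * z + 1) * Gamma s)"
      by (rule divide_left_mono[OF G]) (use z zk p G in \<open>auto intro!: mult_pos_pos\<close>)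
    then show ?thesis by simp
  qed
  also have "\<dots> = (z / (2 * z + 1)) * (z ^ k / Gamma s)"
    by simp
  also have "\<dots> \<le> 1 / 2 * (z ^ k / Gamma s)"
    by (rule mult_right_mono) (use z zk gs in \<open>auto simp: field_simps\<close>)
  finally have fin: "z ^ Suc k / Gamma (\<alpha> * real (Suc k) + 1) \<le> 1 / 2 * (z ^ k / Gamma s)" .
  show "norm (z ^ Suc k / Gamma (\<alpha> * real (Suc k) + 1)) \<le> 1 / 2 * norm (z ^ k / Gamma (\<alpha> * real k + 1))"
  proof -
    have "\<alpha> * real (Suc k) \<ge> 0" using a by simp
    hence "Gamma (\<alpha> * real (Suc k) + 1) > 0" by (intro Gamma_real_pos) linarith
    then show ?thesis using fin z gs s2 by (simp add: s_def abs_of_nonneg)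
  qed
qed simp


lemma ml_zero: "mittag_leffler \<alpha> 0 = 1"
proof -
  have "(\<lambda>k. (1 / Gamma (\<alpha> * real k + 1)) * (0::real) ^ k) sums (1 / Gamma (\<alpha> * real 0 + 1))"
    by (rule powser_sums_zero)
  hence "(\<lambda>k. (0::real) ^ k / Gamma (\<alpha> * real k + 1)) sums 1" by simp
  thus ?thesis unfolding mittag_leffler_def by (rule sums_unique[symmetric])
qed

lemma term_fr: "x > 0 \<Longrightarrow> (x powr \<alpha>) ^ j / Gamma (\<alpha> * real j + 1) = fr (\<alpha> * real j) x"
  unfolding fr_def by (simp add: powr_realpow[symmetric] powr_powr)

lemma powr_sub_strict:
  fixes x y \<alpha> :: real
  assumes x: "x > 0" and y: "y > 0" and a: "\<alpha> > 0" "\<alpha> \<noteq> 1"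
  shows "(\<alpha> < 1 \<longrightarrow> (x + y) powr \<alpha> < x powr \<alpha> + y powr \<alpha>) \<and>
         (\<alpha> > 1 \<longrightarrow> (x + y) powr \<alpha> > x powr \<alpha> + y powr \<alpha>)"
proof -
  define S where "S = x + y"
  define p where "p = x / S"
  define q where "q = y / S"
  have S: "S > 0" using x y by (simp add: S_def)
  have pq: "0 < p" "p < 1" "0 < q" "q < 1" "p + q = 1"
    unfolding p_def q_def using x y S
    by (simp_all add: S_def divide_less_eq add_divide_distrib[symmetric])
  have xe: "x powr \<alpha> = p powr \<alpha> * S powr \<alpha>"
    unfolding p_def using S x by (subst powr_mult[symmetric]) auto
  have ye: "y powr \<alpha> = q powr \<alpha> * S powr \<alpha>"
    unfolding q_def using S y by (subst powr_mult[symmetric]) auto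
  have SP: "S powr \<alpha> > 0" using S by simp
  have sum: "x powr \<alpha> + y powr \<alpha> = (p powr \<alpha> + q powr \<alpha>) * S powr \<alpha>"
    using xe ye by (simp add: algebra_simps)
  show ?thesis
  proof (intro conjI impI)
    assume a1: "\<alpha> < 1"
    have "p < p powr \<alpha>" using powr_less_mono'[of p \<alpha> 1] pq a1 by simp
    moreover have "q < q powr \<alpha>" using powr_less_mono'[of q \<alpha> 1] pq a1 by simp
    ultimately have "1 < p powr \<alpha> + q powr \<alpha>" using pq by linarith
    hence "1 * S powr \<alpha> < (p powr \<alpha> + q powr \<alpha>) * S powr \<alpha>"
      by (rule mult_strict_right_mono[OF _ SP])
    thus "(x + y) powr \<alpha> < x powr \<alpha> + y powr \<alpha>" using sum by (simp add: S_def)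
  next
    assume a1: "\<alpha> > 1"
    have "p powr \<alpha> < p" using powr_less_mono'[of p 1 \<alpha>] pq a1 by simp
    moreover have "q powr \<alpha> < q" using powr_less_mono'[of q 1 \<alpha>] pq a1 by simp
    ultimately have "p powr \<alpha> + q powr \<alpha> < 1" using pq by linarith
    hence "(p powr \<alpha> + q powr \<alpha>) * S powr \<alpha> < 1 * S powr \<alpha>"
      by (rule mult_strict_right_mono[OF _ SP])
    thus "(x + y) powr \<alpha> > x powr \<alpha> + y powr \<alpha>" using sum by (simp add: S_def)
  qed
qed

lemma main_sigma:
  fixes \<alpha> \<sigma> x y :: real
  assumes a: "\<alpha> > 0" and x: "x > 0" and y: "y > 0"
    and ker: "\<And>T x u. 0 < u \<Longrightarrow> u < x \<Longrightarrow> x < T \<Longrightarrow> \<sigma> * (T - u) powr (\<alpha> - 1) \<le> \<sigma> * (x - u) powr (\<alpha> - 1)"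
  shows "\<sigma> * mittag_leffler \<alpha> ((x + y) powr \<alpha>) \<le> \<sigma> * (mittag_leffler \<alpha> (x powr \<alpha>) * mittag_leffler \<alpha> (y powr \<alpha>))"
    and "\<sigma> * fr \<alpha> (x + y) < \<sigma> * (fr \<alpha> x + fr \<alpha> y) \<Longrightarrow>
         \<sigma> * mittag_leffler \<alpha> ((x + y) powr \<alpha>) < \<sigma> * (mittag_leffler \<alpha> (x powr \<alpha>) * mittag_leffler \<alpha> (y powr \<alpha>))"
proof -
  define A where "A = (\<lambda>j. fr (\<alpha> * real j) x)"
  define B where "B = (\<lambda>j. fr (\<alpha> * real j) y)"
  define C where "C = (\<lambda>j. fr (\<alpha> * real j) (x + y))"
  have xy: "x + y > 0" using x y by simp
  have eA: "(\<lambda>j. (x powr \<alpha>) ^ j / Gamma (\<alpha> * real j + 1)) = A"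
    using term_fr[OF x] by (simp add: A_def fun_eq_iff)
  have eB: "(\<lambda>j. (y powr \<alpha>) ^ j / Gamma (\<alpha> * real j + 1)) = B"
    using term_fr[OF y] by (simp add: B_def fun_eq_iff)
  have eC: "(\<lambda>j. ((x + y) powr \<alpha>) ^ j / Gamma (\<alpha> * real j + 1)) = C"
    using term_fr[OF xy] by (simp add: C_def fun_eq_iff)
  have sA: "summable A" using ml_summable[OF a, of "x powr \<alpha>"] eA by simp
  have sB: "summable B" using ml_summable[OF a, of "y powr \<alpha>"] eB by simp
  have sC: "summable C" using ml_summable[OF a, of "(x + y) powr \<alpha>"] eC by simp
  have nA: "(\<lambda>k. norm (A k)) = A" using a by (auto simp: fun_eq_iff A_def fr_nonneg)
  have nB: "(\<lambda>k. norm (B k)) = B" using a by (auto simp: fun_eq_iff B_def fr_nonneg)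
  define D where "D = (\<lambda>k. \<Sum>i\<le>k. A i * B (k - i))"
  have cp: "D sums (suminf A * suminf B)"
    unfolding D_def by (rule Cauchy_product_sums) (use sA sB nA nB in simp_all)
  have mls: "mittag_leffler \<alpha> ((x + y) powr \<alpha>) = suminf C"
            "mittag_leffler \<alpha> (x powr \<alpha>) = suminf A"
            "mittag_leffler \<alpha> (y powr \<alpha>) = suminf B"
    unfolding mittag_leffler_def eA eB eC by simp_all
  have sD: "summable D" using cp by (rule sums_summable)
  have pr: "suminf A * suminf B = suminf D" using cp by (rule sums_unique)
  have tw: "\<sigma> * C n \<le> \<sigma> * D n" for n
    unfolding C_def D_def A_def B_def by (rule termwise[OF a ker x y])
  have L: "\<sigma> * suminf C = (\<Sum>n. \<sigma> * C n)" using sC by (simp add: suminf_mult)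
  have R: "\<sigma> * suminf D = (\<Sum>n. \<sigma> * D n)" using sD by (simp add: suminf_mult)
  have ssC: "summable (\<lambda>n. \<sigma> * C n)" using sC by (rule summable_mult)
  have ssD: "summable (\<lambda>n. \<sigma> * D n)" using sD by (rule summable_mult)
  show "\<sigma> * mittag_leffler \<alpha> ((x + y) powr \<alpha>) \<le> \<sigma> * (mittag_leffler \<alpha> (x powr \<alpha>) * mittag_leffler \<alpha> (y powr \<alpha>))"
    unfolding mls pr L R by (rule suminf_le[OF tw ssC ssD])
  assume st: "\<sigma> * fr \<alpha> (x + y) < \<sigma> * (fr \<alpha> x + fr \<alpha> y)"
  have D1: "D 1 = fr \<alpha> x + fr \<alpha> y"
    unfolding D_def A_def B_def using x y by (simp add: fr_0)
  have C1: "C 1 = fr \<alpha> (x + y)" unfolding C_def by simp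
  have "0 < (\<Sum>n. \<sigma> * D n - \<sigma> * C n)"
  proof (rule suminf_pos2)
    show "summable (\<lambda>n. \<sigma> * D n - \<sigma> * C n)" using ssC ssD by (rule summable_diff[rotated])
    show "0 \<le> \<sigma> * D n - \<sigma> * C n" for n using tw[of n] by simp
    show "0 < \<sigma> * D 1 - \<sigma> * C 1" using st D1 C1 by simp
  qed
  hence "(\<Sum>n. \<sigma> * C n) < (\<Sum>n. \<sigma> * D n)" using suminf_diff[OF ssD ssC] by simp
  then show "\<sigma> * mittag_leffler \<alpha> ((x + y) powr \<alpha>) < \<sigma> * (mittag_leffler \<alpha> (x powr \<alpha>) * mittag_leffler \<alpha> (y powr \<alpha>))"
    unfolding mls pr L R .
qed


theorem theorem1p1:
  fixes \<alpha> x y :: real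
  assumes "x \<ge> 0" and "y \<ge> 0"
  shows "(0 < \<alpha> \<and> \<alpha> < 1 \<longrightarrow>
            mittag_leffler \<alpha> ((x + y) powr \<alpha>)
              \<le> mittag_leffler \<alpha> (x powr \<alpha>) * mittag_leffler \<alpha> (y powr \<alpha>))
       \<and> (\<alpha> > 1 \<longrightarrow>
            mittag_leffler \<alpha> ((x + y) powr \<alpha>)
              \<ge> mittag_leffler \<alpha> (x powr \<alpha>) * mittag_leffler \<alpha> (y powr \<alpha>))
       \<and> (0 < \<alpha> \<and> \<alpha> < 1 \<and> x > 0 \<and> y > 0 \<longrightarrow>
            mittag_leffler \<alpha> ((x + y) powr \<alpha>)
              < mittag_leffler \<alpha> (x powr \<alpha>) * mittag_leffler \<alpha> (y powr \<alpha>))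
       \<and> (\<alpha> > 1 \<and> x > 0 \<and> y > 0 \<longrightarrow>
            mittag_leffler \<alpha> ((x + y) powr \<alpha>)
              > mittag_leffler \<alpha> (x powr \<alpha>) * mittag_leffler \<alpha> (y powr \<alpha>))"

proof -
  consider "x = 0" | "y = 0" | "x > 0 \<and> y > 0" using assms by linarith
  then show ?thesis
  proof cases
    case 1 then show ?thesis by (simp add: ml_zero)
  next
    case 2 then show ?thesis by (simp add: ml_zero)
  next
    case 3
    then have x: "x > 0" and y: "y > 0" by auto
    have P1: "0 < \<alpha> \<and> \<alpha> < 1 \<longrightarrow>
            mittag_leffler \<alpha> ((x + y) powr \<alpha>) \<le> mittag_leffler \<alpha> (x powr \<alpha>) * mittag_leffler \<alpha> (y powr \<alpha>)
          \<and> mittag_leffler \<alpha> ((x + y) powr \<alpha>) < mittag_leffler \<alpha> (x powr \<alpha>) * mittag_leffler \<alpha> (y powr \<alpha>)"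
    proof
      assume a: "0 < \<alpha> \<and> \<alpha> < 1"
      have ker: "1 * (T - u) powr (\<alpha> - 1) \<le> 1 * (x' - u) powr (\<alpha> - 1)"
        if "0 < u" "u < x'" "x' < T" for T x' u
        using powr_mono2'[of "\<alpha> - 1" "x' - u" "T - u"] a that by simp
      have "(x + y) powr \<alpha> < x powr \<alpha> + y powr \<alpha>" using powr_sub_strict[OF x y] a by auto
      hence st: "1 * fr \<alpha> (x + y) < 1 * (fr \<alpha> x + fr \<alpha> y)"
        unfolding fr_def using Gamma_real_pos[of "\<alpha> + 1"] a
        by (simp add: add_divide_distrib[symmetric] divide_strict_right_mono)
      show "mittag_leffler \<alpha> ((x + y) powr \<alpha>) \<le> mittag_leffler \<alpha> (x powr \<alpha>) * mittag_leffler \<alpha> (y powr \<alpha>)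
          \<and> mittag_leffler \<alpha> ((x + y) powr \<alpha>) < mittag_leffler \<alpha> (x powr \<alpha>) * mittag_leffler \<alpha> (y powr \<alpha>)"
        using main_sigma[of \<alpha> x y 1, OF _ x y ker] main_sigma(2)[of \<alpha> x y 1, OF _ x y ker st] a by simp
    qed
    have P2: "\<alpha> > 1 \<longrightarrow>
            mittag_leffler \<alpha> ((x + y) powr \<alpha>) \<ge> mittag_leffler \<alpha> (x powr \<alpha>) * mittag_leffler \<alpha> (y powr \<alpha>)
          \<and> mittag_leffler \<alpha> ((x + y) powr \<alpha>) > mittag_leffler \<alpha> (x powr \<alpha>) * mittag_leffler \<alpha> (y powr \<alpha>)"
    proof
      assume a: "\<alpha> > 1"
      have ker: "-1 * (T - u) powr (\<alpha> - 1) \<le> -1 * (x' - u) powr (\<alpha> - 1)"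
        if "0 < u" "u < x'" "x' < T" for T x' u
        using powr_mono2[of "\<alpha> - 1" "x' - u" "T - u"] a that by simp
      have "(x + y) powr \<alpha> > x powr \<alpha> + y powr \<alpha>" using powr_sub_strict[OF x y] a by auto
      hence "fr \<alpha> x + fr \<alpha> y < fr \<alpha> (x + y)"
        unfolding fr_def using Gamma_real_pos[of "\<alpha> + 1"] a
        by (simp add: add_divide_distrib[symmetric] divide_strict_right_mono)
      hence st: "-1 * fr \<alpha> (x + y) < -1 * (fr \<alpha> x + fr \<alpha> y)" by simp
      have a0: "\<alpha> > 0" using a by simp
      show "mittag_leffler \<alpha> ((x + y) powr \<alpha>) \<ge> mittag_leffler \<alpha> (x powr \<alpha>) * mittag_leffler \<alpha> (y powr \<alpha>)
          \<and> mittag_leffler \<alpha> ((x + y) powr \<alpha>) > mittag_leffler \<alpha> (x powr \<alpha>) * mittag_leffler \<alpha> (y powr \<alpha>)"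
        using main_sigma(1)[of \<alpha> x y "-1", OF a0 x y ker] main_sigma(2)[of \<alpha> x y "-1", OF a0 x y ker st] by simp
    qed
    show ?thesis using P1 P2 by blast
  qed
qed

end
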